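(* For every positive integer $n$, let $\rho(n)$ denote the maximum number of runs in a binary word of length $n$. Then the limit $\lim_{n\to\infty}\rho(n)/n$ exists (as a finite real number).
   Context: Words are finite sequences $w=w[1]w[2]\cdots w[n]$ over the binary alphabet $\{0,1\}$, $|w|=n$, and $w[i..j]=w[i]w[i+1]\cdots w[j]$. An integer $p\ge 1$ is a period of $w$ if $w[i+p]=w[i]$ for all $1\le i\le |w|-p$; the period of $w$ is its least period. A run of $w$ is an integer interval $[i..j]$ with $1\le i<j\le |w|$ such that, with $p$ the least period of $w[i..j]$, we have $j-i+1\ge 2p$, and either $i=1$ or $w[i-1]\neq w[i-1+p]$, and either $j=|w|$ or $w[j+1]\ne w[j+1-p]$. *)

theory Defs
  imports Complex_Main
begin

text \<open>Binary words are lists over bool. Positions are 1-based: letter w[i] is w ! (i - 1).\<close>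

definition letter :: "bool list \<Rightarrow> nat \<Rightarrow> bool" where
  "letter w i = w ! (i - 1)"

definition factor :: "bool list \<Rightarrow> nat \<Rightarrow> nat \<Rightarrow> bool list" where
  "factor w i j = take (j + 1 - i) (drop (i - 1) w)"

definition is_period :: "bool list \<Rightarrow> nat \<Rightarrow> bool" where
  "is_period w p \<longleftrightarrow> p \<ge> 1 \<and> (\<forall>i. 1 \<le> i \<and> i \<le> length w - p \<longrightarrow> letter w (i + p) = letter w i)"

definition least_period :: "bool list \<Rightarrow> nat" where
  "least_period w = (LEAST p. is_period w p)"

definition is_run :: "bool list \<Rightarrow> nat \<Rightarrow> nat \<Rightarrow> bool" where
  "is_run w i j \<longleftrightarrow>
     1 \<le> i \<and> i < j \<and> j \<le> length w \<and>
     (let p = least_period (factor w i j) in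
        j - i + 1 \<ge> 2 * p \<and>
        (i = 1 \<or> letter w (i - 1) \<noteq> letter w (i - 1 + p)) \<and>
        (j = length w \<or> letter w (j + 1) \<noteq> letter w (j + 1 - p)))"

definition runs :: "bool list \<Rightarrow> (nat \<times> nat) set" where
  "runs w = {(i, j). is_run w i j}"

definition rho :: "nat \<Rightarrow> nat" where
  "rho n = Max ((\<lambda>w. card (runs w)) ` {w :: bool list. length w = n})"

end

theory Submission
  imports Defs "HOL-Library.List_Lexorder"
begin


lemma lex_prefix: "(xs::bool list) < xs @ (a # v)"
  by (simp add: list_less_def lexord_append_rightI)

lemma lex_diff: "(a::bool) < b \<Longrightarrow> u @ a # x < u @ b # y"
  by (simp add: list_less_def lexord_append_left_rightI)

lemma lex_app_left: "((zs::bool list) @ x < zs @ y) \<longleftrightarrow> x < y"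
  by (induct zs) auto

lemma lex_eqlen: "length (u::bool list) = length v \<Longrightarrow> u < v \<Longrightarrow> u @ x < v @ y"
proof (induct u arbitrary: v)
  case Nil then show ?case by simp
next
  case (Cons a u) then show ?case by (cases v) auto
qed

lemma lex_eqlen_D: "length (u::bool list) = length v \<Longrightarrow> u @ x < v @ y \<Longrightarrow> u \<noteq> v \<Longrightarrow> u < v"
  by (metis lex_eqlen less_not_sym linorder_neqE)

lemma minrot_lyndon:
  fixes l :: "bool list"
  assumes ne: "\<forall>r. 0<r \<and> r<length l \<longrightarrow> rotate r l \<noteq> l"
    and mn: "\<forall>r<length l. l \<le> rotate r l" and k: "0<k" "k<length l"
  shows "l < drop k l"
proof -
  define p where "p = length l"
  define m where "m = p - k"
  have rk: "rotate k l = drop k l @ take k l" using k by (simp add: rotate_drop_take)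
  have rm: "rotate m l = drop m l @ take m l" using k by (simp add: rotate_drop_take m_def p_def)
  have ltk: "l < rotate k l" using ne mn k by (metis order.not_eq_order_implies_strict)
  have mr: "0 < m" "m < length l" using k by (auto simp: m_def p_def)
  have ltm: "l < rotate m l" using ne mn mr by (metis order.not_eq_order_implies_strict)
  have l1: "l = take m l @ drop m l" by simp
  have l2: "l = take k l @ drop k l" by simp
  have lens: "length (take m l) = length (drop k l)" "length (take k l) = length (drop m l)"
    using k by (auto simp: m_def p_def)
  show ?thesis
  proof (cases "take m l = drop k l")
    case False
    have "take m l @ drop m l < drop k l @ take k l" using ltk rk l1 by simp
    then have "take m l < drop k l" using lex_eqlen_D lens False by blast
    then have "take m l @ drop m l < drop k l @ []" using lex_eqlen lens by blast
    then show ?thesis using l1 by simp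
  next
    case True
    have a: "take m l @ drop m l < take m l @ take k l" using ltk rk l1 True by simp
    then have a': "drop m l < take k l" using lex_app_left by blast
    have "take k l @ drop k l < drop m l @ take m l" using ltm rm l2 by simp
    then have b: "take k l @ drop k l < drop m l @ drop k l" using True by simp
    have "take k l \<noteq> drop m l" using b by (metis less_irrefl)
    then have "take k l < drop m l" using lex_eqlen_D[OF lens(2) b] by blast
    then show ?thesis using a' by (meson less_not_sym)
  qed
qed



definition per :: "bool list \<Rightarrow> nat \<Rightarrow> nat \<Rightarrow> nat \<Rightarrow> bool" where
  "per u s e q \<longleftrightarrow> (\<forall>x. s \<le> x \<longrightarrow> x + q \<le> e \<longrightarrow> u!(x+q) = u!x)"

definition run0 :: "bool list \<Rightarrow> nat \<Rightarrow> nat \<Rightarrow> nat \<Rightarrow> bool" where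
  "run0 u s e p \<longleftrightarrow> s < e \<and> e < length u \<and> 1 \<le> p \<and> 2*p \<le> e+1-s \<and> per u s e p \<and>
     (\<forall>q. 1 \<le> q \<longrightarrow> q < p \<longrightarrow> \<not> per u s e q) \<and>
     (s = 0 \<or> u!(s-1) \<noteq> u!(s-1+p)) \<and> (e+1 = length u \<or> u!(e+1) \<noteq> u!(e+1-p))"

definition runs0 :: "bool list \<Rightarrow> (nat \<times> nat) set" where
  "runs0 u = {(s,e). \<exists>p. run0 u s e p}"

definition slc :: "bool list \<Rightarrow> nat \<Rightarrow> nat \<Rightarrow> bool list" where
  "slc u a l = take l (drop a u)"

definition lyn :: "bool list \<Rightarrow> bool" where
  "lyn l \<longleftrightarrow> (\<forall>k. 0 < k \<and> k < length l \<longrightarrow> l < drop k l)"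

lemma per_mult: "per u s e q \<Longrightarrow> s \<le> x \<Longrightarrow> x + k*q \<le> e \<Longrightarrow> u!(x+k*q) = u!x"
proof (induct k)
  case 0 then show ?case by simp
next
  case (Suc k)
  have a: "s \<le> x+k*q" "x+k*q+q \<le> e" using Suc.prems by auto
  have "u!(x+k*q+q) = u!(x+k*q)" using Suc.prems(1) a unfolding per_def by blast
  then show ?case using Suc by (simp add: add.assoc add.commute add.left_commute)
qed

lemma per_mod1: "per u s e q \<Longrightarrow> s \<le> x \<Longrightarrow> x \<le> y \<Longrightarrow> y \<le> e \<Longrightarrow> x mod q = y mod q \<Longrightarrow> u!x = u!y"
proof -
  assume a: "per u s e q" "s \<le> x" "x \<le> y" "y \<le> e" "x mod q = y mod q"
  then have "q dvd (y - x)" using mod_eq_dvd_iff_nat[of x y q] by simp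
  then obtain k where "y - x = k*q" by (metis dvd_def mult.commute)
  then have "y = x + k*q" using a by simp
  then show ?thesis using per_mult[OF a(1) a(2)] a by simp
qed

lemma per_mod: "per u s e q \<Longrightarrow> s \<le> x \<Longrightarrow> x \<le> e \<Longrightarrow> s \<le> y \<Longrightarrow> y \<le> e \<Longrightarrow> x mod q = y mod q \<Longrightarrow> u!x = u!y"
  by (metis nle_le per_mod1)

lemma per_lift:
  assumes pq: "per u s e q" and q1: "1 \<le> q" and pd: "per u b c d" and sb: "s \<le> b" and ce: "c \<le> e"
    and len: "q + d \<le> c + 1 - b"
  shows "per u s e d"
  unfolding per_def
proof (intro allI impI)
  fix x assume x: "s \<le> x" "x + d \<le> e"
  define x' where "x' = b + (x + q*b - b) mod q"
  have qb: "b \<le> q*b" using q1 by simp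
  have m1: "x' mod q = x mod q" unfolding x'_def
    by (metis add_diff_inverse_nat diff_add_inverse2 le_add2 less_le_not_le mod_add_left_eq mod_add_right_eq mod_mult_self2 order_trans qb)
  have m2: "(x'+d) mod q = (x+d) mod q" using m1 by (metis mod_add_left_eq)
  have lt: "(x + q*b - b) mod q < q" using q1 by simp
  have x'b: "b \<le> x'" "x' + d \<le> c" using lt len unfolding x'_def by auto
  have "u!x = u!x'" using per_mod[OF pq x(1) _ _ _ m1[symmetric]] x x'b sb ce by auto
  moreover have "u!(x+d) = u!(x'+d)" using per_mod[OF pq _ x(2) _ _ m2[symmetric]] x x'b sb ce by auto
  moreover have "u!(x'+d) = u!x'" using pd x'b unfolding per_def by auto
  ultimately show "u!(x+d) = u!x" by simp
qed

lemma overlap: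
  assumes r1: "run0 u s1 e1 p" and r2: "run0 u s2 e2 p"
    and x: "s1 \<le> x" "s2 \<le> x" "x+p \<le> e1" "x+p \<le> e2"
  shows "s1 = s2 \<and> e1 = e2"
proof -
  have p1: "per u s1 e1 p" "per u s2 e2 p" using r1 r2 by (auto simp: run0_def)
  have "\<not> s1 < s2"
  proof
    assume "s1 < s2"
    then have "u!(s2-1) \<noteq> u!(s2-1+p)" using r2 by (auto simp: run0_def)
    moreover have "s1 \<le> s2-1" "s2-1+p \<le> e1" using \<open>s1 < s2\<close> x by auto
    moreover have "u!(s2-1+p) = u!(s2-1)" using p1(1) calculation(2,3) unfolding per_def by blast
    ultimately show False by simp
  qed
  moreover have "\<not> s2 < s1"
  proof
    assume "s2 < s1"
    then have "u!(s1-1) \<noteq> u!(s1-1+p)" using r1 by (auto simp: run0_def)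
    moreover have "s2 \<le> s1-1" "s1-1+p \<le> e2" using \<open>s2 < s1\<close> x by auto
    moreover have "u!(s1-1+p) = u!(s1-1)" using p1(2) calculation(2,3) unfolding per_def by blast
    ultimately show False by simp
  qed
  moreover have "\<not> e1 < e2"
  proof
    assume a: "e1 < e2"
    then have "u!(e1+1) \<noteq> u!(e1+1-p)" using r1 r2 by (auto simp: run0_def)
    moreover have "s2 \<le> e1+1-p" "e1+1-p+p \<le> e2" using a x by auto
    moreover have "u!(e1+1-p+p) = u!(e1+1-p)" using p1(2) calculation(2,3) unfolding per_def by blast
    moreover have "e1+1-p+p = e1+1" using x by auto
    ultimately show False by simp
  qed
  moreover have "\<not> e2 < e1"
  proof
    assume a: "e2 < e1"
    then have "u!(e2+1) \<noteq> u!(e2+1-p)" using r1 r2 by (auto simp: run0_def)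
    moreover have "s1 \<le> e2+1-p" "e2+1-p+p \<le> e1" using a x by auto
    moreover have "u!(e2+1-p+p) = u!(e2+1-p)" using p1(1) calculation(2,3) unfolding per_def by blast
    moreover have "e2+1-p+p = e2+1" using x by auto
    ultimately show False by simp
  qed
  ultimately show ?thesis by simp
qed

lemma run0_p_unique: "run0 u s e p \<Longrightarrow> run0 u s e p' \<Longrightarrow> p = p'"
  unfolding run0_def by (metis linorder_neqE_nat)

lemma run0_not: "run0 (map Not u) s e p \<longleftrightarrow> run0 u s e p"
proof -
  have "per (map Not u) s e q \<longleftrightarrow> per u s e q" if "e < length u" for q
    using that unfolding per_def by auto
  then show ?thesis unfolding run0_def by auto
qed

lemma length_slc: "a + l \<le> length u \<Longrightarrow> length (slc u a l) = l"
  by (simp add: slc_def)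

lemma nth_slc: "t < l \<Longrightarrow> a + l \<le> length u \<Longrightarrow> slc u a l ! t = u!(a+t)"
  by (simp add: slc_def)

lemma drop_slc: "drop k (slc u a l) = slc u (a+k) (l-k)"
  by (simp add: slc_def drop_take add.commute)

lemma slc_app: "slc u c (n+m) = slc u c n @ slc u (c+n) m"
proof -
  have "drop n (drop c u) = drop (c+n) u" by (simp add: add.commute)
  then show ?thesis by (simp add: slc_def take_add)
qed

lemma slc_split: "t < n \<Longrightarrow> c + n \<le> length u \<Longrightarrow> slc u c n = slc u c t @ u!(c+t) # slc u (c+t+1) (n-t-1)"
proof -
  assume a: "t < n" "c + n \<le> length u"
  have "slc u c n = slc u c t @ slc u (c+t) (n-t)" using slc_app[of u c t "n-t"] a by simp
  moreover have "slc u (c+t) (n-t) = u!(c+t) # slc u (c+t+1) (n-t-1)"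
  proof -
    have cl: "c + t < length u" using a by simp
    have "n - t = Suc (n-t-1)" using a by simp
    then have "slc u (c+t) (n-t) = take (Suc (n-t-1)) (drop (c+t) u)" by (simp add: slc_def)
    also have "\<dots> = take (Suc (n-t-1)) (u!(c+t) # drop (Suc (c+t)) u)" using Cons_nth_drop_Suc[OF cl] by simp
    also have "\<dots> = u!(c+t) # slc u (c+t+1) (n-t-1)" by (simp add: slc_def)
    finally show ?thesis .
  qed
  ultimately show ?thesis by simp
qed

lemma lyndon_root:
  assumes r: "run0 u s e p" and hr: "e+1 = length u \<or> u!(e+1) < u!(e+1-p)"
  shows "\<exists>a. s < a \<and> a \<le> s+p \<and> lyn (slc u a p) \<and> (\<forall>l>p. a + l \<le> length u \<longrightarrow> \<not> lyn (slc u a l))"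
proof -
  have p1: "1 \<le> p" and pe: "s + 2*p \<le> e+1" and el: "e < length u" and pr: "per u s e p"
    and mn: "\<And>q. 1 \<le> q \<Longrightarrow> q < p \<Longrightarrow> \<not> per u s e q"
    using r unfolding run0_def by auto
  define l0 where "l0 = slc u (s+1) p"
  have ll0: "length l0 = p" using pe el p1 unfolding l0_def by (intro length_slc) simp
  define RS where "RS = (\<lambda>r. rotate r l0) ` {..<p}"
  have "0 \<in> {..<p}" using p1 by simp
  then have fin: "finite RS" "RS \<noteq> {}" unfolding RS_def by auto
  obtain r0 where r0: "r0 < p" "Min RS = rotate r0 l0" using Min_in[OF fin] unfolding RS_def by auto
  have minr: "\<And>r. r < p \<Longrightarrow> rotate r0 l0 \<le> rotate r l0" using r0 Min_le[OF fin(1)] unfolding RS_def by force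
  define a where "a = s + 1 + r0"
  define lam where "lam = rotate r0 l0"
  have ap: "a + p \<le> e + 1" using r0 pe unfolding a_def by simp
  have lam_eq: "slc u a p = lam"
  proof (rule nth_equalityI)
    show "length (slc u a p) = length lam" using ap el ll0 by (simp add: length_slc lam_def)
    fix t assume "t < length (slc u a p)"
    then have t: "t < p" using ap el by (simp add: length_slc)
    have "slc u a p ! t = u!(a+t)" using t ap el by (simp add: nth_slc)
    moreover have "lam ! t = u!(s+1+(r0+t) mod p)"
    proof -
      have mp: "(r0+t) mod p < p" using p1 by simp
      have "l0 ! ((r0+t) mod p) = u!(s+1+(r0+t) mod p)" unfolding l0_def using pe el mp
        by (intro nth_slc) auto
      moreover have "lam ! t = l0 ! ((r0+t) mod p)" unfolding lam_def using t ll0 by (simp add: nth_rotate)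
      ultimately show ?thesis by simp
    qed
    moreover have "u!(a+t) = u!(s+1+(r0+t) mod p)"
    proof (rule per_mod[OF pr])
      show "s \<le> a+t" "a + t \<le> e" "s \<le> s + 1 + (r0+t) mod p" using t ap unfolding a_def by auto
      have "(r0+t) mod p < p" using p1 by simp
      then show "s + 1 + (r0+t) mod p \<le> e" using pe by simp
      show "(a + t) mod p = (s + 1 + (r0 + t) mod p) mod p" unfolding a_def
        by (metis add.assoc mod_add_right_eq)
    qed
    ultimately show "slc u a p ! t = lam ! t" by simp
  qed
  have llam: "length lam = p" using ll0 lam_def by simp
  have lam_min: "\<forall>r<length lam. lam \<le> rotate r lam"
  proof (intro allI impI)
    fix r assume "r < length lam"
    have "rotate r lam = rotate ((r + r0) mod p) l0"
      unfolding lam_def by (metis rotate_rotate rotate_conv_mod ll0)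
    moreover have "(r + r0) mod p < p" using p1 by simp
    ultimately show "lam \<le> rotate r lam" using minr unfolding lam_def by simp
  qed
  have lam_ne: "\<forall>r. 0 < r \<and> r < length lam \<longrightarrow> rotate r lam \<noteq> lam"
  proof (intro allI impI notI)
    fix r assume rr: "0 < r \<and> r < length lam" and eq: "rotate r lam = lam"
    have "per u s e r" unfolding per_def
    proof (intro allI impI)
      fix x assume x: "s \<le> x" "x + r \<le> e"
      have gen: "u!y = lam ! ((y + p - a) mod p)" if y: "s \<le> y" "y \<le> e" for y
      proof -
        define t where "t = (y + p - a) mod p"
        have tp: "t < p" using p1 unfolding t_def by simp
        have "lam ! t = u!(a+t)" using lam_eq[symmetric] tp ap el by (simp add: nth_slc)
        moreover have "u!(a+t) = u!y"
        proof (rule per_mod[OF pr])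
          show "s \<le> a+t" "a+t \<le> e" "s \<le> y" "y \<le> e" using tp ap y unfolding a_def by auto
          have ya: "a \<le> y + p" using y r0 unfolding a_def by simp
          have "(a + t) mod p = (a + (y + p - a)) mod p" unfolding t_def by (simp add: mod_add_right_eq)
          also have "\<dots> = (y + p) mod p" using ya by simp
          also have "\<dots> = y mod p" by simp
          finally show "(a + t) mod p = y mod p" .
        qed
        ultimately show ?thesis unfolding t_def by simp
      qed
      define t where "t = (x + p - a) mod p"
      have tp: "t < p" using p1 unfolding t_def by simp
      have "u!x = lam!t" using gen x unfolding t_def by simp
      moreover have "u!(x+r) = lam!((x + r + p - a) mod p)" using gen x by simp
      moreover have "(x + r + p - a) mod p = (r + t) mod p"
      proof -
        have ya: "a \<le> x + p" using x r0 unfolding a_def by simp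
        have "(r + t) mod p = (r + (x + p - a)) mod p" unfolding t_def by (simp add: mod_add_right_eq)
        also have "r + (x + p - a) = x + r + p - a" using ya by simp
        finally show ?thesis by simp
      qed
      moreover have "rotate r lam ! t = lam ! ((r + t) mod p)" using tp llam by (simp add: nth_rotate)
      ultimately show "u!(x+r) = u!x" using eq by simp
    qed
    then show False using mn rr llam by auto
  qed
  have lyn1: "lyn (slc u a p)" unfolding lyn_def lam_eq using minrot_lyndon[OF lam_ne lam_min] by blast
  have lyn2: "\<not> lyn (slc u a l)" if l: "p < l" "a + l \<le> length u" for l
  proof -
    define v where "v = slc u a l"
    have dv: "drop p v = slc u (a+p) (l-p)" unfolding v_def by (simp add: drop_slc)
    have "drop p v < v"
    proof (cases "a + l \<le> e + 1")
      case True
      have eqs: "slc u (a+p) (l-p) = slc u a (l-p)"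
      proof (rule nth_equalityI)
        show "length (slc u (a+p) (l-p)) = length (slc u a (l-p))" using l by (simp add: length_slc)
        fix t assume "t < length (slc u (a+p) (l-p))"
        then have t: "t < l - p" using l by (simp add: length_slc)
        have "s \<le> a+t" "a+t+p \<le> e" using t True l unfolding a_def by auto
        then have "u!(a+t+p) = u!(a+t)" using pr unfolding per_def by (metis add.assoc add.commute)
        then show "slc u (a+p) (l-p) ! t = slc u a (l-p) ! t" using t l
          by (simp add: nth_slc add.commute add.left_commute)
      qed
      have "v = slc u a (l-p) @ slc u (a+(l-p)) p" unfolding v_def using slc_app[of u a "l-p" p] l by simp
      moreover have "slc u (a+(l-p)) p \<noteq> []" using l p1 by (simp add: slc_def)
      ultimately show ?thesis using dv eqs lex_prefix by (metis neq_Nil_conv)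
    next
      case False
      have e1: "e + 1 < length u" using False l by simp
      then have lt: "u!(e+1) < u!(e+1-p)" using hr by simp
      define t where "t = e + 1 - a - p"
      have tt: "t < l - p" "a + p + t = e + 1" "a + t = e + 1 - p" using False ap unfolding t_def by auto
      have s1: "slc u (a+p) (l-p) = slc u (a+p) t @ u!(e+1) # slc u (a+p+t+1) (l-p-t-1)"
        using slc_split[of t "l-p" "a+p" u] tt l by simp
      have s2: "v = slc u a t @ u!(e+1-p) # slc u (a+t+1) (l-t-1)"
        unfolding v_def using slc_split[of t l a u] tt l by simp
      have eqs: "slc u (a+p) t = slc u a t"
      proof (rule nth_equalityI)
        show "length (slc u (a+p) t) = length (slc u a t)" using l tt by (simp add: length_slc)
        fix t' assume "t' < length (slc u (a+p) t)"
        then have t': "t' < t" using l tt by (simp add: length_slc)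
        have "s \<le> a+t'" "a+t'+p \<le> e" using t' tt unfolding a_def by auto
        then have "u!(a+t'+p) = u!(a+t')" using pr unfolding per_def by (metis add.assoc add.commute)
        then show "slc u (a+p) t ! t' = slc u a t ! t'" using t' tt l
          by (simp add: nth_slc add.commute add.left_commute)
      qed
      show ?thesis using dv s1 s2 eqs lex_diff[OF lt] by metis
    qed
    moreover have "0 < p" "p < length v" using p1 l unfolding v_def by (auto simp: length_slc)
    ultimately show ?thesis unfolding lyn_def v_def by (meson less_not_sym)
  qed
  have "s < a" "a \<le> s + p" using r0 unfolding a_def by auto
  then show ?thesis using lyn1 lyn2 by blast
qed

lemma run0_facts: "run0 u s e p \<Longrightarrow> s + 2*p \<le> e+1 \<and> e < length u \<and> 1 \<le> p \<and> per u s e p \<and> s < e"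
proof -
  assume "run0 u s e p"
  then have "s < e" "2*p \<le> e+1-s" "e < length u" "1 \<le> p" "per u s e p" unfolding run0_def by auto
  then show ?thesis by linarith
qed

definition good :: "bool list \<Rightarrow> nat \<Rightarrow> nat \<Rightarrow> nat \<Rightarrow> bool \<Rightarrow> bool" where
  "good u s e a b \<longleftrightarrow> (\<exists>p. run0 u s e p \<and> s < a \<and> a \<le> s+p \<and>
      lyn (slc (if b then u else map Not u) a p) \<and>
      (\<forall>l>p. a + l \<le> length u \<longrightarrow> \<not> lyn (slc (if b then u else map Not u) a l)))"

lemma good_ex: "run0 u s e p \<Longrightarrow> \<exists>a b. good u s e a b"
proof -
  assume r: "run0 u s e p"
  show ?thesis
  proof (cases "e+1 = length u \<or> u!(e+1) < u!(e+1-p)")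
    case True
    then obtain a where "s < a \<and> a \<le> s+p \<and> lyn (slc u a p) \<and> (\<forall>l>p. a + l \<le> length u \<longrightarrow> \<not> lyn (slc u a l))"
      using lyndon_root[OF r] by blast
    then have "good u s e a True" unfolding good_def using r by auto
    then show ?thesis by blast
  next
    case False
    then have "u!(e+1) \<noteq> u!(e+1-p)" "e + 1 < length u" using r unfolding run0_def by auto
    then have hr: "(map Not u)!(e+1) < (map Not u)!(e+1-p)" using False by auto
    have r': "run0 (map Not u) s e p" using r run0_not by blast
    obtain a where "s < a \<and> a \<le> s+p \<and> lyn (slc (map Not u) a p) \<and> (\<forall>l>p. a + l \<le> length (map Not u) \<longrightarrow> \<not> lyn (slc (map Not u) a l))"
      using lyndon_root[OF r'] hr by blast
    then have "good u s e a False" unfolding good_def using r by auto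
    then show ?thesis by blast
  qed
qed

lemma good_inj:
  assumes g1: "good u s1 e1 a b" and g2: "good u s2 e2 a b"
  shows "s1 = s2 \<and> e1 = e2"
proof -
  obtain p1 where p1: "run0 u s1 e1 p1" "s1 < a" "a \<le> s1+p1" "lyn (slc (if b then u else map Not u) a p1)"
      "\<forall>l>p1. a + l \<le> length u \<longrightarrow> \<not> lyn (slc (if b then u else map Not u) a l)"
    using g1 unfolding good_def by blast
  obtain p2 where p2: "run0 u s2 e2 p2" "s2 < a" "a \<le> s2+p2" "lyn (slc (if b then u else map Not u) a p2)"
      "\<forall>l>p2. a + l \<le> length u \<longrightarrow> \<not> lyn (slc (if b then u else map Not u) a l)"
    using g2 unfolding good_def by blast
  have b1: "a + p1 \<le> length u" using p1 unfolding run0_def by auto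
  have b2: "a + p2 \<le> length u" using p2 unfolding run0_def by auto
  have "p1 = p2"
  proof (rule ccontr)
    assume "p1 \<noteq> p2"
    then consider "p1 < p2" | "p2 < p1" by linarith
    then show False
    proof cases
      case 1 then show False using p1(5) p2(4) b2 by blast
    next
      case 2 then show False using p2(5) p1(4) b1 by blast
    qed
  qed
  have q1: "s1 + 2*p1 \<le> e1+1" using run0_facts[OF p1(1)] by simp
  have q2: "s2 + 2*p2 \<le> e2+1" using run0_facts[OF p2(1)] by simp
  have "s1 \<le> a-1" "s2 \<le> a-1" "a-1+p1 \<le> e1" "a-1+p1 \<le> e2" using p1(2,3) p2(2,3) q1 q2 \<open>p1 = p2\<close> by auto
  then show ?thesis using overlap[OF p1(1), of s2 e2 "a-1"] p2(1) \<open>p1 = p2\<close> by blast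
qed

lemma card_runs0_le: "card (runs0 u) \<le> 2 * length u"
proof -
  define key where "key = (\<lambda>(s::nat,e::nat). SOME ab. good u s e (fst ab) (snd ab))"
  have kg: "good u s e (fst (key (s,e))) (snd (key (s,e)))" if "(s,e) \<in> runs0 u" for s e
  proof -
    from that obtain p where "run0 u s e p" unfolding runs0_def by blast
    then obtain a b where "good u s e a b" using good_ex by blast
    then have "\<exists>ab. good u s e (fst ab) (snd ab)" by (intro exI[of _ "(a,b)"]) simp
    from someI_ex[OF this] show ?thesis unfolding key_def by simp
  qed
  have "inj_on key (runs0 u)"
  proof (rule inj_onI)
    fix x y assume x: "x \<in> runs0 u" and y: "y \<in> runs0 u" and k: "key x = key y"
    obtain s1 e1 where "x = (s1,e1)" by fastforce
    obtain s2 e2 where "y = (s2,e2)" by fastforce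
    have g1: "good u s1 e1 (fst (key x)) (snd (key x))" using kg[of s1 e1] x \<open>x = (s1,e1)\<close> by simp
    have g2: "good u s2 e2 (fst (key x)) (snd (key x))" using kg[of s2 e2] y k \<open>y = (s2,e2)\<close> by simp
    show "x = y" using good_inj[OF g1 g2] \<open>x = (s1,e1)\<close> \<open>y = (s2,e2)\<close> by simp
  qed
  moreover have "key ` runs0 u \<subseteq> {..<length u} \<times> UNIV"
  proof
    fix z assume "z \<in> key ` runs0 u"
    then obtain s e where se: "(s,e) \<in> runs0 u" "z = key (s,e)" by auto
    then have "good u s e (fst z) (snd z)" using kg by simp
    then have "fst z < length u" unfolding good_def run0_def by auto
    then show "z \<in> {..<length u} \<times> UNIV" by (cases z) auto
  qed
  ultimately have "card (runs0 u) \<le> card ({..<length u} \<times> (UNIV :: bool set))"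
    by (intro card_inj_on_le) auto
  also have "\<dots> = 2 * length u" by (simp add: card_cartesian_product)
  finally show ?thesis .
qed



lemma per_mono: "per u s e q \<Longrightarrow> s \<le> s2 \<Longrightarrow> e2 \<le> e \<Longrightarrow> per u s2 e2 q"
  unfolding per_def by auto

lemma ext_run:
  assumes pr: "per u s e p" and p1: "1 \<le> p" and len: "s + 2*p \<le> e+1" and el: "e < length u"
    and mn: "\<forall>q. 1\<le>q \<longrightarrow> q<p \<longrightarrow> \<not> per u s e q"
  shows "\<exists>s' e'. s' \<le> s \<and> e \<le> e' \<and> run0 u s' e' p"
proof -
  define s' where "s' = (LEAST x. per u x e p)"
  have s's: "s' \<le> s" unfolding s'_def using pr by (rule Least_le)
  have ps': "per u s' e p" unfolding s'_def using pr by (rule LeastI)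
  have ls: "s' > 0 \<Longrightarrow> \<not> per u (s'-1) e p" unfolding s'_def
    by (metis diff_less not_less_Least zero_less_one s'_def)
  define E where "E = {y. e \<le> y \<and> y < length u \<and> per u s' y p}"
  have finE: "finite E" unfolding E_def by (rule finite_subset[of _ "{..<length u}"]) auto
  have eE: "e \<in> E" unfolding E_def using el ps' by auto
  define e' where "e' = Max E"
  have e'E: "e' \<in> E" unfolding e'_def using finE eE by (metis Max_in empty_iff)
  have ee': "e \<le> e'" unfolding e'_def using finE eE by (rule Max_ge)
  have pe': "per u s' e' p" "e' < length u" using e'E unfolding E_def by auto
  have mx: "\<And>y. y \<in> E \<Longrightarrow> y \<le> e'" unfolding e'_def using finE by simp
  have "run0 u s' e' p" unfolding run0_def
  proof (intro conjI allI impI)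
    show "s' < e'" using s's ee' len p1 by linarith
    show "e' < length u" using pe' by simp
    show "1 \<le> p" by fact
    show "2*p \<le> e'+1-s'" using s's ee' len by linarith
    show "per u s' e' p" using pe' by simp
    fix q assume q: "1 \<le> q" "q < p"
    show "\<not> per u s' e' q"
    proof
      assume "per u s' e' q"
      then have "per u s e q" using per_mono s's ee' by blast
      then show False using mn q by blast
    qed
  next
    show "s' = 0 \<or> u ! (s' - 1) \<noteq> u ! (s' - 1 + p)"
    proof (rule ccontr)
      assume a: "\<not> (s' = 0 \<or> u ! (s' - 1) \<noteq> u ! (s' - 1 + p))"
      have "per u (s'-1) e p" unfolding per_def
      proof (intro allI impI)
        fix x assume x: "s'-1 \<le> x" "x + p \<le> e"
        show "u!(x+p) = u!x"
        proof (cases "x = s'-1")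
          case True then show ?thesis using a by simp
        next
          case False then have "s' \<le> x" using x by simp
          then show ?thesis using ps' x unfolding per_def by blast
        qed
      qed
      then show False using ls a by simp
    qed
  next
    show "e' + 1 = length u \<or> u ! (e' + 1) \<noteq> u ! (e' + 1 - p)"
    proof (rule ccontr)
      assume a: "\<not> (e' + 1 = length u \<or> u ! (e' + 1) \<noteq> u ! (e' + 1 - p))"
      have "per u s' (e'+1) p" unfolding per_def
      proof (intro allI impI)
        fix x assume x: "s' \<le> x" "x + p \<le> e'+1"
        show "u!(x+p) = u!x"
        proof (cases "x + p = e'+1")
          case True then have "x = e'+1-p" by simp
          then show ?thesis using a True by simp
        next
          case False then have "x + p \<le> e'" using x by simp
          then show ?thesis using pe' x unfolding per_def by blast
        qed
      qed
      then have "e'+1 \<in> E" unfolding E_def using a pe' ee' by auto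
      then show False using mx by fastforce
    qed
  qed
  then show ?thesis using s's ee' by blast
qed

lemma run0_mn: "run0 u s e p \<Longrightarrow> \<forall>q. 1\<le>q \<longrightarrow> q<p \<longrightarrow> \<not> per u s e q"
  unfolding run0_def by blast

lemma per_app1: "e < length w1 \<Longrightarrow> per (w1 @ w2) s e q \<longleftrightarrow> per w1 s e q"
  unfolding per_def by (auto simp: nth_append)

lemma ext1:
  assumes r: "run0 w1 s e p"
  shows "\<exists>e'. e \<le> e' \<and> run0 (w1 @ w2) s e' p"
proof -
  note f = run0_facts[OF r]
  have pr: "per (w1@w2) s e p" using f per_app1 by blast
  have mn: "\<forall>q. 1\<le>q \<longrightarrow> q<p \<longrightarrow> \<not> per (w1@w2) s e q" using run0_mn[OF r] per_app1 f by blast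
  obtain s' e' where se: "s' \<le> s" "e \<le> e'" "run0 (w1@w2) s' e' p"
    using ext_run[OF pr _ _ _ mn] f by auto
  have "s' = s"
  proof (rule ccontr)
    assume "s' \<noteq> s"
    then have lt: "s' < s" using se by simp
    then have "w1!(s-1) \<noteq> w1!(s-1+p)" using r unfolding run0_def by auto
    moreover have "(w1@w2)!(s-1+p) = (w1@w2)!(s-1)"
    proof -
      have "s' \<le> s-1" "s-1+p \<le> e'" using lt f se(2) by auto
      then show ?thesis using run0_facts[OF se(3)] unfolding per_def by blast
    qed
    moreover have "s-1+p < length w1" "s-1 < length w1" using f lt by auto
    ultimately show False by (simp add: nth_append)
  qed
  then show ?thesis using se by blast
qed

lemma per_app2: "per (w1 @ w2) (length w1 + s) (length w1 + e) q \<longleftrightarrow> per w2 s e q"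
proof
  assume a: "per (w1 @ w2) (length w1 + s) (length w1 + e) q"
  show "per w2 s e q" unfolding per_def
  proof (intro allI impI)
    fix x assume x: "s \<le> x" "x + q \<le> e"
    have "(w1@w2)!(length w1 + x + q) = (w1@w2)!(length w1 + x)" using a x unfolding per_def by auto
    then show "w2!(x+q) = w2!x" by (metis add.assoc nth_append_length_plus)
  qed
next
  assume a: "per w2 s e q"
  show "per (w1 @ w2) (length w1 + s) (length w1 + e) q" unfolding per_def
  proof (intro allI impI)
    fix x assume x: "length w1 + s \<le> x" "x + q \<le> length w1 + e"
    define y where "y = x - length w1"
    have xy: "x = length w1 + y" using x unfolding y_def by simp
    have "w2!(y+q) = w2!y" using a x xy unfolding per_def by auto
    then show "(w1@w2)!(x+q) = (w1@w2)!x" using xy by (metis add.assoc nth_append_length_plus)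
  qed
qed

lemma ext2:
  assumes r: "run0 w2 s e p"
  shows "\<exists>s'. s' \<le> length w1 + s \<and> run0 (w1 @ w2) s' (length w1 + e) p"
proof -
  note f = run0_facts[OF r]
  define m where "m = length w1"
  have pr: "per (w1@w2) (m+s) (m+e) p" using f per_app2 unfolding m_def by blast
  have mn: "\<forall>q. 1\<le>q \<longrightarrow> q<p \<longrightarrow> \<not> per (w1@w2) (m+s) (m+e) q"
    using run0_mn[OF r] per_app2 unfolding m_def by blast
  obtain s' e' where se: "s' \<le> m+s" "m+e \<le> e'" "run0 (w1@w2) s' e' p"
    using ext_run[OF pr _ _ _ mn] f unfolding m_def by auto
  note g = run0_facts[OF se(3)]
  have "e' = m+e"
  proof (rule ccontr)
    assume "e' \<noteq> m+e"
    then have lt: "m+e < e'" using se by simp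
    then have "e+1 < length w2" using g unfolding m_def by simp
    then have "w2!(e+1) \<noteq> w2!(e+1-p)" using r unfolding run0_def by auto
    moreover have "(w1@w2)!(m+(e+1-p)+p) = (w1@w2)!(m+(e+1-p))"
    proof -
      have "s' \<le> m+(e+1-p)" "m+(e+1-p)+p \<le> e'" using lt f se(1) by auto
      then show ?thesis using g unfolding per_def by blast
    qed
    moreover have "m+(e+1-p)+p = m+(e+1)" using f by simp
    ultimately show False unfolding m_def by (metis nth_append_length_plus)
  qed
  then show ?thesis using se unfolding m_def by blast
qed

lemma finite_runs0: "finite (runs0 u)"
proof (rule finite_subset)
  show "runs0 u \<subseteq> {..<length u} \<times> {..<length u}"
    unfolding runs0_def run0_def by auto
qed auto

lemma chain_bound:
  "\<And>P::nat set. card P = n \<Longrightarrow> finite P \<Longrightarrow> P \<noteq> {} \<Longrightarrow> (\<forall>p\<in>P. 1 \<le> p) \<Longrightarrow>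
    (\<forall>p\<in>P. \<forall>q\<in>P. p < q \<longrightarrow> 2*p \<le> q) \<Longrightarrow> 2^(card P) \<le> 2 * Max P"
proof (induct n)
  case 0 then show ?case by simp
next
  case (Suc n)
  define M where "M = Max P"
  have MP: "M \<in> P" unfolding M_def using Suc by simp
  define P' where "P' = P - {M}"
  have cP': "card P' = n" using Suc MP unfolding P'_def by simp
  show ?case
  proof (cases "P' = {}")
    case True
    then have "card P = 1" using Suc cP' by simp
    then show ?thesis using Suc MP unfolding M_def by force
  next
    case False
    have fP': "finite P'" using Suc unfolding P'_def by simp
    have ih: "2^(card P') \<le> 2 * Max P'" using Suc.hyps[OF cP' fP' False] Suc.prems unfolding P'_def by auto
    have M'in: "Max P' \<in> P'" using fP' False by simp
    then have "Max P' < M" using Suc MP unfolding P'_def M_def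
      by (metis Diff_iff Max_ge insertI1 order_le_neq_trans)
    then have "2 * Max P' \<le> M" using Suc.prems M'in MP unfolding P'_def by auto
    moreover have "card P = Suc (card P')" using Suc cP' by simp
    ultimately show ?thesis using ih unfolding M_def by simp
  qed
qed

lemma coll_spacing:
  assumes r1: "run0 u s1 e1 p" and a1: "s1 + 2*p \<le> m" "m + 2*p \<le> e1+1"
    and r2: "run0 u s2 e2 q" and a2: "s2 + 2*q \<le> m" "m + 2*q \<le> e2+1" and pq: "p < q"
  shows "2*p \<le> q"
proof (rule ccontr)
  assume "\<not> 2*p \<le> q"
  note f1 = run0_facts[OF r1] and f2 = run0_facts[OF r2]
  have w: "per u (m-2*p) (m+2*p-1) p" using per_mono[of u s1 e1 p] f1 a1 by auto
  have "per u s2 e2 p"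
    by (rule per_lift[OF _ _ w]) (use f2 a2 \<open>\<not> 2*p \<le> q\<close> pq in auto)
  then show False using run0_mn[OF r2] f1 pq by blast
qed

lemma coll_card:
  fixes w1 w2 :: "bool list"
  assumes n1: "1 \<le> length w2"
  defines "C \<equiv> {(s,e). \<exists>p. run0 (w1@w2) s e p \<and> s + 2*p \<le> length w1 \<and> length w1 + 2*p \<le> e+1 \<and> 2*p \<le> length w2}"
  shows "real (card C) \<le> log 2 (length w2)"
proof -
  define u where "u = w1 @ w2"
  define m where "m = length w1"
  define pof where "pof = (\<lambda>z. THE p. run0 u (fst z) (snd z) p)"
  have Cp: "run0 u s e (pof (s,e)) \<and> s + 2*pof (s,e) \<le> m \<and> m + 2*pof (s,e) \<le> e+1 \<and> 2*pof (s,e) \<le> length w2"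
    if "(s,e) \<in> C" for s e
  proof -
    have "\<exists>p. run0 u s e p \<and> s + 2*p \<le> m \<and> m + 2*p \<le> e+1 \<and> 2*p \<le> length w2"
      using that unfolding C_def u_def m_def by simp
    then obtain p where p: "run0 u s e p" "s + 2*p \<le> m" "m + 2*p \<le> e+1" "2*p \<le> length w2" by blast
    have "pof (s,e) = p" unfolding pof_def using p(1) run0_p_unique by (simp, blast)
    then show ?thesis using p by simp
  qed
  have finC: "finite C"
    by (rule finite_subset[OF _ finite_runs0[of u]]) (auto simp: C_def runs0_def u_def)
  have inj: "inj_on pof C"
  proof (rule inj_onI)
    fix x y assume x: "x \<in> C" and y: "y \<in> C" and eq: "pof x = pof y"
    obtain s1 e1 where x1: "x = (s1,e1)" by fastforce
    obtain s2 e2 where y1: "y = (s2,e2)" by fastforce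
    have c1: "run0 u s1 e1 (pof x)" "s1 + 2*pof x \<le> m" "m + 2*pof x \<le> e1+1" using Cp[of s1 e1] x x1 by auto
    have c2: "run0 u s2 e2 (pof x)" "s2 + 2*pof x \<le> m" "m + 2*pof x \<le> e2+1" using Cp[of s2 e2] y y1 eq by auto
    have "s1 = s2 \<and> e1 = e2" by (rule overlap[OF c1(1) c2(1), of "m - 2*pof x"]) (use c1 c2 run0_facts[OF c1(1)] in auto)
    then show "x = y" using x1 y1 by simp
  qed
  define P where "P = pof ` C"
  have cardP: "card P = card C" unfolding P_def using inj by (simp add: card_image)
  show ?thesis
  proof (cases "C = {}")
    case True
    have "(1::real) \<le> real (length w2)" using n1 by simp
    then have "0 \<le> log 2 (real (length w2))" using zero_le_log_cancel_iff[of 2 "real (length w2)"] by linarith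
    then show ?thesis using True by simp
  next
    case False
    have finP: "finite P" "P \<noteq> {}" using finC False unfolding P_def by auto
    have P1: "\<forall>p\<in>P. 1 \<le> p" unfolding P_def using Cp run0_facts by fastforce
    have P2: "\<forall>p\<in>P. 2*p \<le> length w2" unfolding P_def using Cp by fastforce
    have P3: "\<forall>p\<in>P. \<forall>q\<in>P. p < q \<longrightarrow> 2*p \<le> q"
    proof (intro ballI impI)
      fix p q assume "p \<in> P" "q \<in> P" "p < q"
      then obtain s1 e1 s2 e2 where "(s1,e1) \<in> C" "p = pof (s1,e1)" "(s2,e2) \<in> C" "q = pof (s2,e2)"
        unfolding P_def by auto
      then show "2*p \<le> q" using coll_spacing[of u s1 e1 p m s2 e2 q] Cp \<open>p < q\<close> by blast
    qed
    have "2^(card P) \<le> 2 * Max P" using chain_bound[OF refl finP(1) finP(2) P1 P3] .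
    also have "\<dots> \<le> length w2" using P2 finP by simp
    finally have "card P \<le> log 2 (length w2)" using le_log2_of_power by blast
    then show ?thesis using cardP by simp
  qed
qed

lemma concat_bound:
  fixes w1 w2 :: "bool list"
  assumes n1: "1 \<le> length w2"
  shows "real (card (runs0 w1)) + real (card (runs0 w2)) \<le> real (card (runs0 (w1@w2))) + log 2 (length w2)"
    and "card (runs0 w1) \<le> card (runs0 (w1@w2))"
proof -
  define u where "u = w1 @ w2"
  define m where "m = length w1"
  define g1 where "g1 = (\<lambda>z. (fst z, SOME e'. \<exists>p. run0 w1 (fst z) (snd z) p \<and> run0 u (fst z) e' p))"
  define g2 where "g2 = (\<lambda>z. (SOME s'. \<exists>p. run0 w2 (fst z) (snd z) p \<and> run0 u s' (m + snd z) p, m + snd z))"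
  have g1p: "\<exists>p. run0 w1 s e p \<and> run0 u s (snd (g1 (s,e))) p" if "(s,e) \<in> runs0 w1" for s e
  proof -
    from that obtain p where p: "run0 w1 s e p" unfolding runs0_def by blast
    then obtain e' where "run0 u s e' p" using ext1 unfolding u_def by blast
    then have "\<exists>e'. \<exists>p. run0 w1 s e p \<and> run0 u s e' p" using p by blast
    from someI_ex[OF this] show ?thesis unfolding g1_def by simp
  qed
  have g2p: "\<exists>p. run0 w2 s e p \<and> run0 u (fst (g2 (s,e))) (m+e) p" if "(s,e) \<in> runs0 w2" for s e
  proof -
    from that obtain p where p: "run0 w2 s e p" unfolding runs0_def by blast
    then obtain s' where "run0 u s' (m+e) p" using ext2 unfolding u_def m_def by blast
    then have "\<exists>s'. \<exists>p. run0 w2 s e p \<and> run0 u s' (m+e) p" using p by blast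
    from someI_ex[OF this] show ?thesis unfolding g2_def by simp
  qed
  have inj1: "inj_on g1 (runs0 w1)"
  proof (rule inj_onI)
    fix x y assume x: "x \<in> runs0 w1" and y: "y \<in> runs0 w1" and eq: "g1 x = g1 y"
    obtain s1 e1 where x1: "x = (s1,e1)" by fastforce
    obtain s2 e2 where y1: "y = (s2,e2)" by fastforce
    have ss: "s1 = s2" using eq x1 y1 unfolding g1_def by simp
    obtain p1 where p1: "run0 w1 s1 e1 p1" "run0 u s1 (snd (g1 x)) p1" using g1p x x1 by blast
    obtain p2 where p2: "run0 w1 s2 e2 p2" "run0 u s2 (snd (g1 x)) p2" using g1p y y1 eq by fastforce
    have pp: "p1 = p2" using p1(2) p2(2) ss run0_p_unique by blast
    have "s1 = s2 \<and> e1 = e2"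
      by (rule overlap[OF p1(1), of s2 e2 s1]) (use p2 pp ss run0_facts[OF p1(1)] run0_facts[OF p2(1)] in auto)
    then show "x = y" using x1 y1 by simp
  qed
  have inj2: "inj_on g2 (runs0 w2)"
  proof (rule inj_onI)
    fix x y assume x: "x \<in> runs0 w2" and y: "y \<in> runs0 w2" and eq: "g2 x = g2 y"
    obtain s1 e1 where x1: "x = (s1,e1)" by fastforce
    obtain s2 e2 where y1: "y = (s2,e2)" by fastforce
    have ee: "e1 = e2" using eq x1 y1 unfolding g2_def by simp
    obtain p1 where p1: "run0 w2 s1 e1 p1" "run0 u (fst (g2 x)) (m+e1) p1" using g2p x x1 by blast
    obtain p2 where p2: "run0 w2 s2 e2 p2" "run0 u (fst (g2 x)) (m+e2) p2" using g2p y y1 eq by fastforce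
    have pp: "p1 = p2" using p1(2) p2(2) ee run0_p_unique by blast
    have "s1 = s2 \<and> e1 = e2"
      by (rule overlap[OF p1(1), of s2 e2 "e1 - p1"]) (use p2 pp ee run0_facts[OF p1(1)] run0_facts[OF p2(1)] in auto)
    then show "x = y" using x1 y1 by simp
  qed
  define G1 where "G1 = g1 ` runs0 w1"
  define G2 where "G2 = g2 ` runs0 w2"
  have G1s: "G1 \<subseteq> runs0 u"
  proof
    fix z assume "z \<in> G1"
    then obtain s e where se: "(s,e) \<in> runs0 w1" "z = g1 (s,e)" unfolding G1_def by auto
    then obtain p where "run0 u s (snd (g1 (s,e))) p" using g1p by blast
    moreover have "fst (g1 (s,e)) = s" unfolding g1_def by simp
    ultimately show "z \<in> runs0 u" using se unfolding runs0_def by (cases z) auto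
  qed
  have G2s: "G2 \<subseteq> runs0 u"
  proof
    fix z assume "z \<in> G2"
    then obtain s e where se: "(s,e) \<in> runs0 w2" "z = g2 (s,e)" unfolding G2_def by auto
    then obtain p where "run0 u (fst (g2 (s,e))) (m+e) p" using g2p by blast
    moreover have "snd (g2 (s,e)) = m+e" unfolding g2_def by simp
    ultimately show "z \<in> runs0 u" using se unfolding runs0_def by (cases z) auto
  qed
  have cG1: "card G1 = card (runs0 w1)" unfolding G1_def using inj1 by (simp add: card_image)
  have cG2: "card G2 = card (runs0 w2)" unfolding G2_def using inj2 by (simp add: card_image)
  define C where "C = {(s,e). \<exists>p. run0 (w1@w2) s e p \<and> s + 2*p \<le> length w1 \<and> length w1 + 2*p \<le> e+1 \<and> 2*p \<le> length w2}"
  have GC: "G1 \<inter> G2 \<subseteq> C"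
  proof
    fix z assume z: "z \<in> G1 \<inter> G2"
    then obtain s1 e1 where se1: "(s1,e1) \<in> runs0 w1" "z = g1 (s1,e1)" unfolding G1_def by auto
    obtain s2 e2 where se2: "(s2,e2) \<in> runs0 w2" "z = g2 (s2,e2)" using z unfolding G2_def by auto
    obtain p where p: "run0 w1 s1 e1 p" "run0 u s1 (snd z) p" using g1p[OF se1(1)] se1(2) by auto
    obtain q where q: "run0 w2 s2 e2 q" "run0 u (fst z) (m+e2) q" using g2p[OF se2(1)] se2(2) by auto
    have z1: "fst z = s1" using se1 unfolding g1_def by simp
    have z2: "snd z = m + e2" using se2 unfolding g2_def by simp
    have pq: "p = q" using p(2) q(2) z1 z2 run0_p_unique by metis
    note f1 = run0_facts[OF p(1)] and f2 = run0_facts[OF q(1)]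
    have "run0 (w1@w2) s1 (m+e2) p \<and> s1 + 2*p \<le> length w1 \<and> length w1 + 2*p \<le> (m+e2)+1 \<and> 2*p \<le> length w2"
      using p(2) z2 f1 f2 pq unfolding u_def m_def by auto
    then show "z \<in> C" unfolding C_def using z1 z2 by (cases z) auto
  qed
  have finu: "finite (runs0 u)" by (rule finite_runs0)
  have fG: "finite G1" "finite G2" using finite_subset[OF G1s finu] finite_subset[OF G2s finu] by auto
  have finC: "finite C"
    by (rule finite_subset[OF _ finite_runs0[of "w1@w2"]]) (auto simp: C_def runs0_def)
  have "card (G1 \<inter> G2) \<le> card C" using GC finC by (rule card_mono[rotated])
  moreover have "card G1 + card G2 = card (G1 \<union> G2) + card (G1 \<inter> G2)" using fG card_Un_Int by blast
  moreover have "card (G1 \<union> G2) \<le> card (runs0 u)" using G1s G2s finu by (intro card_mono) auto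
  moreover have "real (card C) \<le> log 2 (length w2)" using coll_card[OF n1] unfolding C_def by simp
  ultimately show "real (card (runs0 w1)) + real (card (runs0 w2)) \<le> real (card (runs0 (w1@w2))) + log 2 (length w2)"
    using cG1 cG2 unfolding u_def by linarith
  have "card G1 \<le> card (runs0 u)" using G1s finu by (intro card_mono) auto
  then show "card (runs0 w1) \<le> card (runs0 (w1@w2))" using cG1 unfolding u_def by simp
qed



lemma letter_factor:
  assumes "1 \<le> i" "j \<le> length w" "1 \<le> t" "t \<le> j + 1 - i"
  shows "letter (factor w i j) t = w!(i - 1 + (t - 1))"
  using assms unfolding letter_def factor_def by simp

lemma length_factor: "1 \<le> i \<Longrightarrow> i \<le> j \<Longrightarrow> j \<le> length w \<Longrightarrow> length (factor w i j) = j + 1 - i"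
  unfolding factor_def by simp

lemma is_period_factor:
  assumes ij: "1 \<le> i" "i < j" "j \<le> length w"
  shows "is_period (factor w i j) q \<longleftrightarrow> (1 \<le> q \<and> per w (i-1) (j-1) q)"
proof -
  have lv: "length (factor w i j) = j + 1 - i" using ij by (simp add: length_factor)
  show ?thesis
  proof
    assume a: "is_period (factor w i j) q"
    have q1: "1 \<le> q" using a unfolding is_period_def by simp
    have "per w (i-1) (j-1) q" unfolding per_def
    proof (intro allI impI)
      fix x assume x: "i - 1 \<le> x" "x + q \<le> j - 1"
      define t where "t = x + 2 - i"
      have t: "1 \<le> t" "t \<le> length (factor w i j) - q" using x ij lv q1 unfolding t_def by auto
      have "letter (factor w i j) (t + q) = letter (factor w i j) t" using a t unfolding is_period_def by blast
      moreover have "letter (factor w i j) (t + q) = w!(x+q)" using t ij lv x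
        by (subst letter_factor) (auto simp: t_def)
      moreover have "letter (factor w i j) t = w!x" using t ij lv x
        by (subst letter_factor) (auto simp: t_def)
      ultimately show "w!(x+q) = w!x" by simp
    qed
    then show "1 \<le> q \<and> per w (i-1) (j-1) q" using q1 by simp
  next
    assume a: "1 \<le> q \<and> per w (i-1) (j-1) q"
    show "is_period (factor w i j) q" unfolding is_period_def
    proof (intro conjI allI impI)
      show "1 \<le> q" using a by simp
      fix t assume t: "1 \<le> t \<and> t \<le> length (factor w i j) - q"
      define x where "x = i - 1 + (t - 1)"
      have x: "i - 1 \<le> x" "x + q \<le> j - 1" using t ij lv a unfolding x_def by auto
      have "w!(x+q) = w!x" using a x unfolding per_def by blast
      moreover have "letter (factor w i j) (t + q) = w!(i - 1 + (t + q - 1))" using t ij lv a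
        by (subst letter_factor) auto
      moreover have "i - 1 + (t + q - 1) = x + q" using t a unfolding x_def by simp
      moreover have "letter (factor w i j) t = w!x" using t ij lv a
        by (subst letter_factor) (auto simp: x_def)
      ultimately show "letter (factor w i j) (t + q) = letter (factor w i j) t" by metis
    qed
  qed
qed

lemma is_run_run0:
  assumes r: "is_run w i j"
  shows "1 \<le> i \<and> run0 w (i-1) (j-1) (least_period (factor w i j))"
proof -
  have ij: "1 \<le> i" "i < j" "j \<le> length w" using r unfolding is_run_def by auto
  define v where "v = factor w i j"
  define p where "p = least_period v"
  have lv: "length v = j + 1 - i" using ij unfolding v_def by (simp add: length_factor)
  have ex: "is_period v (length v)" unfolding is_period_def using lv ij by auto
  have pp: "is_period v p" unfolding p_def least_period_def using ex by (rule LeastI)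
  have pmin: "\<And>q. q < p \<Longrightarrow> \<not> is_period v q" unfolding p_def least_period_def by (rule not_less_Least)
  have rr: "j - i + 1 \<ge> 2 * p \<and> (i = 1 \<or> letter w (i - 1) \<noteq> letter w (i - 1 + p)) \<and>
        (j = length w \<or> letter w (j + 1) \<noteq> letter w (j + 1 - p))"
    using r unfolding is_run_def p_def v_def Let_def by auto
  have pe: "1 \<le> p \<and> per w (i-1) (j-1) p" using pp is_period_factor[OF ij] unfolding v_def by blast
  have "run0 w (i-1) (j-1) p" unfolding run0_def
  proof (intro conjI allI impI)
    show "i - 1 < j - 1" "j - 1 < length w" using ij by auto
    show "1 \<le> p" "per w (i-1) (j-1) p" using pe by auto
    show "2 * p \<le> j - 1 + 1 - (i - 1)" using rr ij by auto
    fix q assume q: "1 \<le> q" "q < p"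
    show "\<not> per w (i-1) (j-1) q" using pmin[OF q(2)] is_period_factor[OF ij, of q] q unfolding v_def by blast
  next
    show "i - 1 = 0 \<or> w ! (i - 1 - 1) \<noteq> w ! (i - 1 - 1 + p)"
    proof (cases "i = 1")
      case True then show ?thesis by simp
    next
      case False
      then have "letter w (i - 1) \<noteq> letter w (i - 1 + p)" using rr by simp
      moreover have "i - 1 - 1 + p = i - 1 + p - 1" using False ij by simp
      ultimately show ?thesis unfolding letter_def by simp
    qed
  next
    show "j - 1 + 1 = length w \<or> w ! (j - 1 + 1) \<noteq> w ! (j - 1 + 1 - p)"
    proof (cases "j = length w")
      case True
      then have "j - 1 + 1 = length w" using ij by simp
      then show ?thesis by simp
    next
      case False
      then have "letter w (j + 1) \<noteq> letter w (j + 1 - p)" using rr by simp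
      moreover have "j - 1 + 1 = j" "j + 1 - p - 1 = j - 1 + 1 - p" using ij rr by auto
      ultimately show ?thesis unfolding letter_def by simp
    qed
  qed
  then show ?thesis using ij unfolding p_def v_def by simp
qed

lemma run0_is_run:
  assumes r: "run0 w s e p"
  shows "is_run w (s+1) (e+1)"
proof -
  note f = run0_facts[OF r]
  define i where "i = s + 1"
  define j where "j = e + 1"
  have ij: "1 \<le> i" "i < j" "j \<le> length w" using f unfolding i_def j_def by auto
  have lp: "least_period (factor w i j) = p" unfolding least_period_def
  proof (rule Least_equality)
    show "is_period (factor w i j) p" using is_period_factor[OF ij] f unfolding i_def j_def by simp
    fix q assume "is_period (factor w i j) q"
    then have "1 \<le> q" "per w s e q" using is_period_factor[OF ij] unfolding i_def j_def by auto
    then show "p \<le> q" using run0_mn[OF r] by (meson not_le)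
  qed
  have l: "i = 1 \<or> letter w (i - 1) \<noteq> letter w (i - 1 + p)"
  proof (cases "s = 0")
    case True then show ?thesis unfolding i_def by simp
  next
    case False
    then have "w!(s-1) \<noteq> w!(s-1+p)" using r unfolding run0_def by simp
    moreover have "i - 1 + p - 1 = s - 1 + p" using False f unfolding i_def by simp
    ultimately show ?thesis unfolding letter_def i_def using False by simp
  qed
  have rt: "j = length w \<or> letter w (j + 1) \<noteq> letter w (j + 1 - p)"
  proof (cases "e + 1 = length w")
    case True then show ?thesis unfolding j_def by simp
  next
    case False
    then have "w!(e+1) \<noteq> w!(e+1-p)" using r unfolding run0_def by simp
    moreover have "j + 1 - p - 1 = e + 1 - p" using f unfolding j_def by simp
    ultimately show ?thesis unfolding letter_def j_def by simp
  qed
  have "2 * p \<le> j - i + 1" using f unfolding i_def j_def by linarith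
  then have "is_run w i j" unfolding is_run_def Let_def lp using ij l rt by simp
  then show ?thesis unfolding i_def j_def .
qed

lemma card_runs: "card (runs w) = card (runs0 w)"
proof -
  have "runs w = (\<lambda>(s,e). (s+1, e+1)) ` runs0 w"
  proof (intro equalityI subsetI)
    fix z assume "z \<in> runs w"
    then obtain i j where z: "z = (i,j)" "is_run w i j" unfolding runs_def by auto
    then have a: "1 \<le> i" "run0 w (i-1) (j-1) (least_period (factor w i j))" using is_run_run0 by auto
    then have "(i-1, j-1) \<in> runs0 w" unfolding runs0_def by auto
    moreover have "j \<ge> 1" using run0_facts[OF a(2)] a by auto
    ultimately show "z \<in> (\<lambda>(s,e). (s+1, e+1)) ` runs0 w" using z a by force
  next
    fix z assume "z \<in> (\<lambda>(s,e). (s+1, e+1)) ` runs0 w"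
    then obtain s e p where "z = (s+1, e+1)" "run0 w s e p" unfolding runs0_def by auto
    then show "z \<in> runs w" unfolding runs_def using run0_is_run by auto
  qed
  moreover have "inj_on (\<lambda>(s::nat,e::nat). (s+1, e+1)) (runs0 w)" by (rule inj_onI) auto
  ultimately show ?thesis by (simp add: card_image)
qed

lemma fin_words: "finite {w :: bool list. length w = n}"
  using finite_lists_length_eq[of "UNIV :: bool set" n] by simp

lemma rho_ge: "length w = n \<Longrightarrow> card (runs0 w) \<le> rho n"
  unfolding rho_def card_runs[symmetric] by (rule Max_ge) (use fin_words in auto)

lemma rho_ex: "\<exists>w. length w = n \<and> rho n = card (runs0 w)"
proof -
  have ne: "{w :: bool list. length w = n} \<noteq> {}" by (metis (mono_tags) empty_iff length_replicate mem_Collect_eq)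
  have "rho n \<in> (\<lambda>w. card (runs w)) ` {w. length w = n}" unfolding rho_def
    by (rule Max_in) (use fin_words ne in auto)
  then show ?thesis using card_runs by auto
qed

lemma rho_le: "rho n \<le> 2 * n"
  using rho_ex[of n] card_runs0_le by metis

lemma rho_mono: "a \<le> b \<Longrightarrow> rho a \<le> rho b"
proof -
  assume ab: "a \<le> b"
  show ?thesis
  proof (cases "a = b")
    case True then show ?thesis by simp
  next
    case False
    obtain w where w: "length w = a" "rho a = card (runs0 w)" using rho_ex by blast
    define w2 where "w2 = replicate (b - a) False"
    have "1 \<le> length w2" using ab False unfolding w2_def by simp
    then have "card (runs0 w) \<le> card (runs0 (w @ w2))" by (rule concat_bound(2))
    also have "\<dots> \<le> rho b" using w ab unfolding w2_def by (intro rho_ge) simp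
    finally show ?thesis using w by simp
  qed
qed

lemma rho_super: "1 \<le> b \<Longrightarrow> real (rho a) + real (rho b) \<le> real (rho (a+b)) + log 2 (real b)"
proof -
  assume b: "1 \<le> b"
  obtain w1 where w1: "length w1 = a" "rho a = card (runs0 w1)" using rho_ex by blast
  obtain w2 where w2: "length w2 = b" "rho b = card (runs0 w2)" using rho_ex by blast
  have "real (card (runs0 w1)) + real (card (runs0 w2)) \<le> real (card (runs0 (w1@w2))) + log 2 (length w2)"
    using b w2 by (intro concat_bound(1)) simp
  moreover have "card (runs0 (w1@w2)) \<le> rho (a+b)" using w1 w2 by (intro rho_ge) simp
  ultimately show ?thesis using w1 w2 by simp
qed

lemma rho_mult: "1 \<le> n \<Longrightarrow> real (rho (k*n)) \<ge> real k * (real (rho n) - log 2 (real n))"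
proof (induct k)
  case 0 then show ?case by simp
next
  case (Suc k)
  have "real (rho (k*n)) + real (rho n) \<le> real (rho (k*n+n)) + log 2 (real n)"
    using rho_super[OF Suc.prems] by blast
  then show ?case using Suc by (simp add: algebra_simps)
qed

lemma log_over: "(\<lambda>n. log 2 (real n) / real n) \<longlonglongrightarrow> 0"
proof -
  have "(\<lambda>n. ln (real n) / real n) \<longlonglongrightarrow> 0"
    using filterlim_compose[OF ln_x_over_x_tendsto_0 filterlim_real_sequentially] by simp
  then have "(\<lambda>n. (ln (real n) / real n) / ln 2) \<longlonglongrightarrow> 0 / ln 2"
    by (intro tendsto_divide tendsto_const) auto
  then show ?thesis by (simp add: log_def mult.commute)
qed

definition cc :: "nat \<Rightarrow> real" where
  "cc n = (real (rho n) - log 2 (real n)) / real n"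

lemma cc_le: "1 \<le> n \<Longrightarrow> cc n \<le> 2"
proof -
  assume n: "1 \<le> n"
  have "real (rho n) \<le> 2 * real n" using rho_le[of n] by linarith
  moreover have "0 \<le> log 2 (real n)" using n zero_le_log_cancel_iff[of 2 "real n"] by simp
  ultimately have "real (rho n) - log 2 (real n) \<le> 2 * real n" by linarith
  then show ?thesis unfolding cc_def using n by (simp add: divide_le_eq)
qed

lemma lower:
  assumes n0: "1 \<le> n0" and N: "n0 \<le> N"
  shows "real N * cc n0 - 2 * real n0 \<le> real (rho N)"
proof -
  define k where "k = N div n0"
  define d where "d = N mod n0"
  have Nk: "N = k * n0 + d" unfolding k_def d_def by simp
  have dn: "d < n0" unfolding d_def using n0 by simp
  have c0: "real n0 * cc n0 = real (rho n0) - log 2 (real n0)" unfolding cc_def using n0 by simp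
  have "real k * (real (rho n0) - log 2 (real n0)) \<le> real (rho (k*n0))" using rho_mult[OF n0] by blast
  also have "\<dots> \<le> real (rho N)" using rho_mono[of "k*n0" N] Nk by simp
  finally have a: "real k * real n0 * cc n0 \<le> real (rho N)" using c0 by (simp add: mult.assoc)
  have "real d * cc n0 \<le> real d * 2" using cc_le[OF n0] by (intro mult_left_mono) auto
  also have "\<dots> \<le> 2 * real n0" using dn by simp
  finally have b: "real d * cc n0 \<le> 2 * real n0" .
  have "real N * cc n0 = real k * real n0 * cc n0 + real d * cc n0" using Nk by (simp add: algebra_simps)
  then show ?thesis using a b by linarith
qed

theorem mainTheorem2:
  shows "\<exists>L :: real. (\<lambda>n. real (rho n) / real n) \<longlonglongrightarrow> L"
proof -
  define S where "S = cc ` {1..}"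
  define A where "A = Sup S"
  have Sne: "S \<noteq> {}" unfolding S_def by auto
  have Sbdd: "bdd_above S" unfolding S_def using cc_le by (intro bdd_aboveI[of _ 2]) auto
  have up: "\<And>n. 1 \<le> n \<Longrightarrow> cc n \<le> A" unfolding A_def S_def
    using Sbdd unfolding S_def by (intro cSup_upper) auto
  have "(\<lambda>n. real (rho n) / real n) \<longlonglongrightarrow> A"
  proof (rule LIMSEQ_I)
    fix r :: real assume r: "0 < r"
    obtain N1 where N1: "\<And>n. n \<ge> N1 \<Longrightarrow> norm (log 2 (real n) / real n - 0) < r"
      using LIMSEQ_D[OF log_over r] by blast
    have "A - r/2 < Sup S" using r unfolding A_def by simp
    then obtain n0 where n0: "1 \<le> n0" "A - r/2 < cc n0"
      using less_cSup_iff[OF Sne Sbdd] unfolding S_def by auto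
    define N2 where "N2 = nat \<lceil>4 * real n0 / r\<rceil> + 1"
    have N2: "4 * real n0 / r < real N2" unfolding N2_def by linarith
    show "\<exists>no. \<forall>n\<ge>no. norm (real (rho n) / real n - A) < r"
    proof (intro exI allI impI)
      fix n assume n: "max N1 (max N2 n0) \<le> n"
      have n1: "1 \<le> n" using n n0 by simp
      have rn: "0 < real n" using n1 by simp
      have "real (rho n) / real n = cc n + log 2 (real n) / real n" unfolding cc_def using rn
        by (simp add: diff_divide_distrib)
      moreover have "\<bar>log 2 (real n) / real n\<bar> < r" using N1[of n] n by simp
      ultimately have u: "real (rho n) / real n < A + r" using up[OF n1] by linarith
      have "real n * cc n0 - 2 * real n0 \<le> real (rho n)" using lower[OF n0(1)] n by simp
      then have "(real n * cc n0 - 2 * real n0) / real n \<le> real (rho n) / real n" using rn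
        by (intro divide_right_mono) auto
      moreover have "(real n * cc n0 - 2 * real n0) / real n = cc n0 - 2 * real n0 / real n" using rn
        by (simp add: diff_divide_distrib)
      ultimately have "cc n0 - 2 * real n0 / real n \<le> real (rho n) / real n" by simp
      moreover have "2 * real n0 / real n < r/2"
      proof -
        have "4 * real n0 / r < real n" using N2 n by simp
        then have "4 * real n0 < r * real n" using r by (simp add: divide_less_eq mult.commute)
        then show ?thesis using rn by (simp add: divide_less_eq)
      qed
      ultimately have l: "A - r < real (rho n) / real n" using n0 by linarith
      show "norm (real (rho n) / real n - A) < r" using u l by simp
    qed
  qed
  then show ?thesis by blast
qed

end
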